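(* $F$ is bounded below (on $\{x\in\mathcal{X}:z\ge0\}$) and $r$ is bounded. $F$ and $r$ are Lipschitz continuous in $x$ with respect to $\|\cdot\|_{\mathcal{X}}$. Furthermore, $F$ and $r$ are Lipschitz continuous in $z$ with respect to $\|\cdot\|_{L^1(\Omega)}$.
   Context: Let $-\infty<t_0<t_E<\infty$, $\Omega=(t_0,t_E)$, points $t_1,\dots,t_M\in[t_0,t_E]$. $\mathcal{X}=(H^1(\Omega))^{n_y}\times(L^2(\Omega))^{n_z}$ with inner product $\sum_j\langle y_j,v_j\rangle_{H^1(\Omega)}+\sum_j\langle z_j,w_j\rangle_{L^2(\Omega)}$ and induced norm $\|\cdot\|_{\mathcal{X}}$; $x=(y,z)$. Given $f:\mathbb{R}^{n_y}\times\mathbb{R}^{n_y}\times\mathbb{R}^{n_z}\times\Omega\to\mathbb{R}$, $c:\mathbb{R}^{n_y}\times\mathbb{R}^{n_y}\times\mathbb{R}^{n_z}\times\Omega\to\mathbb{R}^{n_c}$, $b:(\mathbb{R}^{n_y})^M\to\mathbb{R}^{n_b}$, define $F(x)=\int_\Omega f(\dot y(t),y(t),z(t),t)dt$ and $r(x)=\int_\Omega\|c(\dot y(t),y(t),z(t),t)\|_2^2dt+\|b(y(t_1),\dots,y(t_M))\|_2^2$. Assumptions: (A.2) $\|c(\dot y(t),y(t),z(t),t)\|_1$ and $\|b(y(t_1),\dots,y(t_M))\|_1$ are bounded for all $x\in\mathcal{X}$ with $z\ge0$ and all $t\in\Omega$, and $F$ is bounded below on $\{x\in\mathcal{X}:z\ge0\}$.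 (A.3) $f,c,b$ are globally Lipschitz continuous in all arguments except $t$. *)

theory Defs
  imports "HOL-Analysis.Analysis"
begin

definition Omega :: "real \<Rightarrow> real \<Rightarrow> real set" where
  "Omega t0 tE = {t0<..<tE}"

definition L2_on :: "real \<Rightarrow> real \<Rightarrow> (real \<Rightarrow> 'a::euclidean_space) \<Rightarrow> bool" where
  "L2_on t0 tE u \<longleftrightarrow> u \<in> borel_measurable (lebesgue_on (Omega t0 tE))
     \<and> integrable (lebesgue_on (Omega t0 tE)) (\<lambda>t. (norm (u t))\<^sup>2)"

text \<open>y in H^1(Omega)^ny with weak derivative dy: y is the (absolutely) continuous
  representative on [t0,tE], y(t) = y(t0) + int_{t0}^t dy, with y, dy in L2.\<close>
definition H1_pair :: "real \<Rightarrow> real \<Rightarrow> (real \<Rightarrow> real^'n) \<Rightarrow> (real \<Rightarrow> real^'n) \<Rightarrow> bool" where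
  "H1_pair t0 tE y dy \<longleftrightarrow> L2_on t0 tE y \<and> L2_on t0 tE dy
     \<and> (\<forall>t\<in>{t0..tE}. (dy has_integral (y t - y t0)) {t0..t})"

text \<open>Elements x = (y,z) of X, represented as triples (y, dy, z) with dy the weak derivative of y.\<close>
definition Xspace :: "real \<Rightarrow> real \<Rightarrow>
    ((real \<Rightarrow> real^'ny) \<times> (real \<Rightarrow> real^'ny) \<times> (real \<Rightarrow> real^'nz)) set" where
  "Xspace t0 tE = {(y, dy, z). H1_pair t0 tE y dy \<and> L2_on t0 tE z}"

definition normX :: "real \<Rightarrow> real \<Rightarrow> (real \<Rightarrow> real^'ny) \<Rightarrow> (real \<Rightarrow> real^'ny) \<Rightarrow> (real \<Rightarrow> real^'nz) \<Rightarrow> real" where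
  "normX t0 tE y dy z = sqrt (
      (\<integral>t. (norm (y t))\<^sup>2 \<partial>lebesgue_on (Omega t0 tE))
    + (\<integral>t. (norm (dy t))\<^sup>2 \<partial>lebesgue_on (Omega t0 tE))
    + (\<integral>t. (norm (z t))\<^sup>2 \<partial>lebesgue_on (Omega t0 tE)))"

definition l1norm :: "real^'n \<Rightarrow> real" where
  "l1norm v = (\<Sum>j\<in>UNIV. \<bar>v $ j\<bar>)"

definition L1norm :: "real \<Rightarrow> real \<Rightarrow> (real \<Rightarrow> real^'n) \<Rightarrow> real" where
  "L1norm t0 tE z = (\<integral>t. l1norm (z t) \<partial>lebesgue_on (Omega t0 tE))"

definition z_nonneg :: "real \<Rightarrow> real \<Rightarrow> (real \<Rightarrow> real^'n) \<Rightarrow> bool" where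
  "z_nonneg t0 tE z \<longleftrightarrow> (\<forall>t\<in>Omega t0 tE. \<forall>j. 0 \<le> z t $ j)"

definition Ffun :: "real \<Rightarrow> real \<Rightarrow> (real^'ny \<Rightarrow> real^'ny \<Rightarrow> real^'nz \<Rightarrow> real \<Rightarrow> real)
    \<Rightarrow> (real \<Rightarrow> real^'ny) \<Rightarrow> (real \<Rightarrow> real^'ny) \<Rightarrow> (real \<Rightarrow> real^'nz) \<Rightarrow> real" where
  "Ffun t0 tE f y dy z = (\<integral>t. f (dy t) (y t) (z t) t \<partial>lebesgue_on (Omega t0 tE))"

definition rfun :: "real \<Rightarrow> real \<Rightarrow> ('m::finite \<Rightarrow> real)
    \<Rightarrow> (real^'ny \<Rightarrow> real^'ny \<Rightarrow> real^'nz \<Rightarrow> real \<Rightarrow> real^'nc)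
    \<Rightarrow> ((real^'ny)^'m \<Rightarrow> real^'nb)
    \<Rightarrow> (real \<Rightarrow> real^'ny) \<Rightarrow> (real \<Rightarrow> real^'ny) \<Rightarrow> (real \<Rightarrow> real^'nz) \<Rightarrow> real" where
  "rfun t0 tE tp c b y dy z =
     (\<integral>t. (norm (c (dy t) (y t) (z t) t))\<^sup>2 \<partial>lebesgue_on (Omega t0 tE))
     + (norm (b (\<chi> i. y (tp i))))\<^sup>2"

end

theory Submission
  imports Defs
begin

lemma cara_meas_real:
  fixes g :: "'p::{metric_space,second_countable_topology} \<Rightarrow> real \<Rightarrow> real" and X :: "real \<Rightarrow> 'p"
  assumes gm: "\<And>p. (\<lambda>t. g p t) \<in> borel_measurable M"
    and gl: "\<And>t. t \<in> space M \<Longrightarrow> L-lipschitz_on UNIV (\<lambda>p. g p t)"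
    and Xm: "X \<in> borel_measurable M"
  shows "(\<lambda>t. g (X t) t) \<in> borel_measurable M"
proof -
  define K where "K = max L 0"
  have K0: "K \<ge> 0" by (simp add: K_def)
  have gl': "K-lipschitz_on UNIV (\<lambda>p. g p t)" if "t \<in> space M" for t
    using gl[OF that] lipschitz_on_le K_def by fastforce
  obtain D :: "'p set" where D: "countable D" "\<And>U. open U \<Longrightarrow> U \<noteq> {} \<Longrightarrow> \<exists>d\<in>D. d \<in> U"
    using countable_dense_setE by blast
  have DN: "D \<noteq> {}" using D(2)[of UNIV] by auto
  have eq: "g (X t) t = (INF d\<in>D. g d t + K * dist (X t) d)" if t: "t \<in> space M" for t
  proof (rule antisym)
    have lo: "g (X t) t \<le> g d t + K * dist (X t) d" for d
      using lipschitz_onD[OF gl'[OF t], of "X t" d] by (simp add: dist_real_def)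
    then show "g (X t) t \<le> (INF d\<in>D. g d t + K * dist (X t) d)"
      by (intro cINF_greatest[OF DN])
    show "(INF d\<in>D. g d t + K * dist (X t) d) \<le> g (X t) t"
    proof (rule field_le_epsilon)
      fix e :: real assume e: "e > 0"
      have "e / (2*K+1) > 0" using e K0 by simp
      then obtain d where d: "d\<in>D" "d \<in> ball (X t) (e/(2*K+1))"
        using D(2)[of "ball (X t) (e/(2*K+1))"] by auto
      have bdd: "bdd_below ((\<lambda>d. g d t + K*dist (X t) d) ` D)"
        using lo by (intro bdd_belowI2) 
      have "(INF d\<in>D. g d t + K * dist (X t) d) \<le> g d t + K * dist (X t) d"
        by (rule cINF_lower[OF bdd d(1)])
      also have "\<dots> \<le> g (X t) t + 2*K*dist (X t) d"
        using lipschitz_onD[OF gl'[OF t], of d "X t"] by (simp add: dist_real_def dist_commute)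
      also have "2*K*dist (X t) d \<le> 2*K*(e/(2*K+1))"
        using d(2) K0 by (intro mult_left_mono) (auto simp: dist_commute)
      also have "2*K*(e/(2*K+1)) \<le> e"
        using K0 e by (simp add: field_simps)
      finally show "(INF d\<in>D. g d t + K * dist (X t) d) \<le> g (X t) t + e" by simp
    qed
  qed
  have dm: "(\<lambda>t. dist (X t) d) \<in> borel_measurable M" for d
  proof -
    have "(\<lambda>x. dist x d) \<in> borel_measurable borel"
      by (intro borel_measurable_continuous_onI continuous_intros)
    then show ?thesis using measurable_compose[OF Xm] by blast
  qed
  have "(\<lambda>t. INF d\<in>D. g d t + K * dist (X t) d) \<in> borel_measurable M"
    by (intro borel_measurable_cINF_real D(1) borel_measurable_add gm borel_measurable_times borel_measurable_const dm)
  then show ?thesis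
    using eq by (subst measurable_cong[where g="\<lambda>t. INF d\<in>D. g d t + K * dist (X t) d"]) auto
qed

lemma cara_meas:
  fixes g :: "'p::{metric_space,second_countable_topology} \<Rightarrow> real \<Rightarrow> 'r::euclidean_space" and X :: "real \<Rightarrow> 'p"
  assumes gm: "\<And>p. (\<lambda>t. g p t) \<in> borel_measurable M"
    and gl: "\<And>t. t \<in> space M \<Longrightarrow> L-lipschitz_on UNIV (\<lambda>p. g p t)"
    and Xm: "X \<in> borel_measurable M"
  shows "(\<lambda>t. g (X t) t) \<in> borel_measurable M"
proof (subst borel_measurable_euclidean_space, intro ballI)
  fix i :: 'r assume i: "i \<in> Basis"
  show "(\<lambda>t. g (X t) t \<bullet> i) \<in> borel_measurable M"
  proof (rule cara_meas_real[where g="\<lambda>p t. g p t \<bullet> i" and L=L, OF _ _ Xm])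
    show "(\<lambda>t. g p t \<bullet> i) \<in> borel_measurable M" for p using gm[of p] by measurable
    fix t assume t: "t \<in> space M"
    show "L-lipschitz_on UNIV (\<lambda>p. g p t \<bullet> i)"
    proof (rule lipschitz_onI)
      fix x y :: 'p
      have "dist (g x t \<bullet> i) (g y t \<bullet> i) = \<bar>(g x t - g y t) \<bullet> i\<bar>"
        by (simp add: dist_real_def inner_diff_left)
      also have "\<dots> \<le> dist (g x t) (g y t)" using Basis_le_norm[OF i] by (simp add: dist_norm)
      also have "\<dots> \<le> L * dist x y" using lipschitz_onD[OF gl[OF t]] by simp
      finally show "dist (g x t \<bullet> i) (g y t \<bullet> i) \<le> L * dist x y" .
    next
      show "0 \<le> L" using gl[OF t] lipschitz_on_nonneg by blast
    qed
  qed
qed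

lemma lip_integral:
  fixes g1 g2 h :: "real \<Rightarrow> real"
  assumes g1m: "g1 \<in> borel_measurable M" and g2m: "g2 \<in> borel_measurable M"
    and hi: "integrable M h"
    and le: "\<And>t. t \<in> space M \<Longrightarrow> \<bar>g1 t - g2 t\<bar> \<le> h t"
  shows "\<bar>integral\<^sup>L M g1 - integral\<^sup>L M g2\<bar> \<le> integral\<^sup>L M h"
proof -
  have h0: "0 \<le> integral\<^sup>L M h"
    using le by (intro integral_nonneg_AE AE_I2) (meson abs_ge_zero order_trans)
  have d: "integrable M (\<lambda>t. g1 t - g2 t)"
    using hi g1m g2m le
    by (intro Bochner_Integration.integrable_bound[OF hi]) (auto intro!: AE_I2 simp: abs_le_iff dest!: le intro: order_trans[OF _ abs_ge_self])
  show ?thesis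
  proof (cases "integrable M g1")
    case True
    have i2: "integrable M g2"
    proof -
      have "integrable M (\<lambda>t. g1 t - (g1 t - g2 t))" using True d by (rule Bochner_Integration.integrable_diff)
      then show ?thesis by simp
    qed
    have "\<bar>integral\<^sup>L M g1 - integral\<^sup>L M g2\<bar> = \<bar>integral\<^sup>L M (\<lambda>t. g1 t - g2 t)\<bar>"
      using True i2 by (simp add: integral_diff)
    also have "\<dots> \<le> integral\<^sup>L M (\<lambda>t. \<bar>g1 t - g2 t\<bar>)" by (rule integral_abs_bound)
    also have "\<dots> \<le> integral\<^sup>L M h"
      using d hi le by (intro integral_mono) auto
    finally show ?thesis .
  next
    case False
    have "\<not> integrable M g2"
    proof
      assume "integrable M g2"
      then have "integrable M (\<lambda>t. g2 t + (g1 t - g2 t))" using d by (rule Bochner_Integration.integrable_add)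
      then show False using False by simp
    qed
    then show ?thesis using False h0 by (simp add: not_integrable_integral_eq)
  qed
qed

lemma cs_integrable:
  fixes h :: "real \<Rightarrow> real"
  assumes fm: "finite_measure M" and hm: "h \<in> borel_measurable M"
    and h2: "integrable M (\<lambda>t. (h t)^2)"
  shows "integrable M h"
proof -
  have "integrable M (\<lambda>t. 1 + (h t)^2)"
    using h2 finite_measure.integrable_const[OF fm] by (intro Bochner_Integration.integrable_add) blast+
  then show ?thesis
  proof (rule Bochner_Integration.integrable_bound)
    show "h \<in> borel_measurable M" by fact
    show "AE x in M. norm (h x) \<le> norm (1 + (h x)^2)"
    proof (intro AE_I2)
      fix x
      have aa: "a \<le> 1 + a^2" for a :: real
      proof -
        have "0 \<le> (a - 1/2)^2" by simp
        moreover have "(a - 1/2)^2 = a^2 - a + 1/4" by (simp add: power2_eq_square field_simps)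
        ultimately show ?thesis by linarith
      qed
      have "\<bar>h x\<bar> \<le> 1 + \<bar>h x\<bar>^2" by (rule aa)
      then have "\<bar>h x\<bar> \<le> 1 + (h x)^2" by simp
      then show "norm (h x) \<le> norm (1 + (h x)^2)" by simp
    qed
  qed
qed

lemma cs_ineq:
  fixes h :: "real \<Rightarrow> real"
  assumes fm: "finite_measure M" and hm: "h \<in> borel_measurable M"
    and h2: "integrable M (\<lambda>t. (h t)^2)" and mu: "measure M (space M) > 0"
  shows "\<bar>integral\<^sup>L M h\<bar> \<le> sqrt (measure M (space M)) * sqrt (integral\<^sup>L M (\<lambda>t. (h t)^2))"
proof -
  define \<mu> where "\<mu> = measure M (space M)"
  define I where "I = integral\<^sup>L M h"
  define J where "J = integral\<^sup>L M (\<lambda>t. (h t)^2)"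
  define m where "m = I / \<mu>"
  have hi: "integrable M h" using cs_integrable[OF fm hm h2] .
  have ci: "integrable M (\<lambda>t. c)" for c :: real using finite_measure.integrable_const[OF fm] .
  have "0 \<le> integral\<^sup>L M (\<lambda>t. (h t - m)^2)" by (intro integral_nonneg_AE AE_I2) simp
  also have "integral\<^sup>L M (\<lambda>t. (h t - m)^2) = integral\<^sup>L M (\<lambda>t. (h t)^2 - (2*m) * h t + m^2)"
    by (simp add: power2_diff algebra_simps)
  also have "\<dots> = J - 2*m*I + \<mu> * m^2"
    using hi h2 ci by (simp add: J_def I_def \<mu>_def integral_add integral_diff)
  also have "\<dots> = J - I^2/\<mu>"
    using mu by (simp add: m_def \<mu>_def field_simps power2_eq_square)
  finally have "I^2 \<le> \<mu> * J" using mu by (simp add: \<mu>_def field_simps)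
  then have "sqrt (I^2) \<le> sqrt (\<mu> * J)" by (rule real_sqrt_le_mono)
  then show ?thesis by (simp add: I_def J_def \<mu>_def real_sqrt_mult)
qed

lemma fmM: "finite_measure (lebesgue_on (Omega t0 tE))"
  unfolding Omega_def by (intro finite_measure_lebesgue_on) simp

lemma muM: "t0 < tE \<Longrightarrow> measure (lebesgue_on (Omega t0 tE)) (space (lebesgue_on (Omega t0 tE))) = tE - t0"
  by (simp add: Omega_def measure_restrict_space)

lemma spaceM: "space (lebesgue_on (Omega t0 tE)) = Omega t0 tE"
  by simp

lemma L2_meas: "L2_on t0 tE u \<Longrightarrow> u \<in> borel_measurable (lebesgue_on (Omega t0 tE))"
  by (simp add: L2_on_def)

lemma L2_sq: "L2_on t0 tE u \<Longrightarrow> integrable (lebesgue_on (Omega t0 tE)) (\<lambda>t. (norm (u t))\<^sup>2)"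
  by (simp add: L2_on_def)

lemma L2_norm_int: "L2_on t0 tE u \<Longrightarrow> integrable (lebesgue_on (Omega t0 tE)) (\<lambda>t. norm (u t))"
  by (rule cs_integrable[OF fmM]) (auto simp: L2_on_def)

lemma L2_int: "L2_on t0 tE u \<Longrightarrow> integrable (lebesgue_on (Omega t0 tE)) u"
  using L2_norm_int integrable_norm_iff L2_meas by blast

lemma L2_diff:
  assumes "L2_on t0 tE u" "L2_on t0 tE v"
  shows "L2_on t0 tE (\<lambda>t. u t - v t)"
  unfolding L2_on_def
proof
  show m: "(\<lambda>t. u t - v t) \<in> borel_measurable (lebesgue_on (Omega t0 tE))"
    using assms by (auto simp: L2_on_def)
  have "integrable (lebesgue_on (Omega t0 tE)) (\<lambda>t. 2 * (norm (u t))\<^sup>2 + 2 * (norm (v t))\<^sup>2)"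
    using assms by (intro Bochner_Integration.integrable_add integrable_mult_right) (auto simp: L2_on_def)
  then show "integrable (lebesgue_on (Omega t0 tE)) (\<lambda>t. (norm (u t - v t))\<^sup>2)"
  proof (rule Bochner_Integration.integrable_bound)
    show "(\<lambda>t. (norm (u t - v t))\<^sup>2) \<in> borel_measurable (lebesgue_on (Omega t0 tE))"
      using m by measurable
    show "AE x in lebesgue_on (Omega t0 tE). norm ((norm (u x - v x))\<^sup>2) \<le> norm (2 * (norm (u x))\<^sup>2 + 2 * (norm (v x))\<^sup>2)"
    proof (intro AE_I2)
      fix x
      have a: "norm (u x - v x) \<le> norm (u x) + norm (v x)" by (rule norm_triangle_ineq4)
      have "(norm (u x - v x))\<^sup>2 \<le> (norm (u x) + norm (v x))\<^sup>2"
        using a by (intro power_mono) auto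
      also have "\<dots> \<le> 2 * (norm (u x))\<^sup>2 + 2 * (norm (v x))\<^sup>2"
        using sum_squares_bound[of "norm (u x)" "norm (v x)"]
        by (simp add: power2_eq_square algebra_simps)
      finally show "norm ((norm (u x - v x))\<^sup>2) \<le> norm (2 * (norm (u x))\<^sup>2 + 2 * (norm (v x))\<^sup>2)"
        by simp
    qed
  qed
qed

lemma sobolev:
  fixes y1 dy1 y2 dy2 :: "real \<Rightarrow> real^'n"
  assumes tt: "t0 < tE" and H1: "H1_pair t0 tE y1 dy1" "H1_pair t0 tE y2 dy2" and s: "s \<in> {t0..tE}"
  shows "norm (y1 s - y2 s) \<le> (\<integral>t. norm (y1 t - y2 t) \<partial>lebesgue_on (Omega t0 tE)) / (tE - t0)
            + 2 * (\<integral>t. norm (dy1 t - dy2 t) \<partial>lebesgue_on (Omega t0 tE))"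
proof -
  define M where "M = lebesgue_on (Omega t0 tE)"
  define e where "e = (\<lambda>t. y1 t - y2 t)"
  define de where "de = (\<lambda>t. dy1 t - dy2 t)"
  define K where "K = (\<integral>t. norm (de t) \<partial>M)"
  have Le: "L2_on t0 tE e" and Lde: "L2_on t0 tE de"
    using H1 unfolding e_def de_def H1_pair_def by (auto intro: L2_diff)
  have Os: "Omega t0 tE \<in> sets lebesgue" by (simp add: Omega_def)
  have nK: "((\<lambda>t. norm (de t)) has_integral K) {t0..tE}"
    using has_integral_integral_lebesgue_on[OF L2_norm_int[OF Lde] Os]
    by (simp add: K_def M_def Omega_def has_integral_Icc_iff_Ioo)
  have deInt: "de integrable_on {t0..tE}"
    using has_integral_integral_lebesgue_on[OF L2_int[OF Lde] Os]
    unfolding Omega_def by (metis has_integral_Icc_iff_Ioo has_integral_integrable)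
  have bnd: "norm (e r - e t0) \<le> K" if r: "r \<in> {t0..tE}" for r
  proof -
    have "(de has_integral ((y1 r - y1 t0) - (y2 r - y2 t0))) {t0..r}"
      unfolding de_def using H1 r by (intro has_integral_diff) (auto simp: H1_pair_def)
    then have hr: "(de has_integral (e r - e t0)) {t0..r}" by (simp add: e_def algebra_simps)
    have sub: "{t0..r} \<subseteq> {t0..tE}" using r by auto
    have "norm (e r - e t0) = norm (integral {t0..r} de)" using hr by (simp add: integral_unique)
    also have "\<dots> \<le> integral {t0..r} (\<lambda>t. norm (de t))"
      using integrable_on_subinterval[OF deInt sub] integrable_on_subinterval[OF has_integral_integrable[OF nK] sub]
      by (intro Henstock_Kurzweil_Integration.integral_norm_bound_integral) auto
    also have "\<dots> \<le> integral {t0..tE} (\<lambda>t. norm (de t))"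
      using integrable_on_subinterval[OF has_integral_integrable[OF nK] sub] has_integral_integrable[OF nK] sub
      by (intro integral_subset_le) auto
    also have "\<dots> = K" using nK by (simp add: integral_unique)
    finally show ?thesis .
  qed
  have pt: "norm (e s) \<le> norm (e t) + 2*K" if t: "t \<in> {t0..tE}" for t
  proof -
    have a1: "e s - e t0 + (e t0 - e t) = e s - e t" by simp
    have a2: "e s - e t + e t = e s" by simp
    have "norm (e s) \<le> norm (e s - e t0) + norm (e t - e t0) + norm (e t)"
      using norm_triangle_ineq[of "e s - e t0" "e t0 - e t"] norm_triangle_ineq[of "e s - e t" "e t"]
        norm_minus_commute[of "e t0" "e t"] unfolding a1 a2 by linarith
    then show ?thesis using bnd[OF s] bnd[OF t] by linarith
  qed
  have ci: "integrable M (\<lambda>t. c)" for c :: real using finite_measure.integrable_const[OF fmM] M_def by blast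
  have "(\<integral>t. norm (e s) \<partial>M) \<le> (\<integral>t. norm (e t) + 2*K \<partial>M)"
    using pt L2_norm_int[OF Le] ci unfolding M_def
    by (intro integral_mono Bochner_Integration.integrable_add) (auto simp: Omega_def)
  then have "(tE - t0) * norm (e s) \<le> (\<integral>t. norm (e t) \<partial>M) + (tE - t0) * (2*K)"
    using L2_norm_int[OF Le] ci muM[OF tt] by (simp add: M_def Bochner_Integration.integral_add, argo)
  then have "norm (e s) \<le> (\<integral>t. norm (e t) \<partial>M) / (tE - t0) + 2*K"
    using tt by (simp add: field_simps)
  then show ?thesis by (simp add: e_def de_def K_def M_def)
qed

lemma dist_triple:
  fixes a1 a2 :: "'a::real_normed_vector" and b1 b2 :: "'b::real_normed_vector"
    and c1 c2 :: "'c::real_normed_vector"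
  shows "dist (a1, b1, c1) (a2, b2, c2) \<le> norm (a1 - a2) + norm (b1 - b2) + norm (c1 - c2)"
proof -
  have "dist (a1, b1, c1) (a2, b2, c2) = norm (a1 - a2, b1 - b2, c1 - c2)" by (simp add: dist_norm)
  also have "\<dots> \<le> norm (a1 - a2) + norm (b1 - b2, c1 - c2)" by (rule norm_Pair_le)
  also have "norm (b1 - b2, c1 - c2) \<le> norm (b1 - b2) + norm (c1 - c2)" by (rule norm_Pair_le)
  finally show ?thesis by simp
qed

lemma sqdiff:
  fixes a b :: "'a::real_normed_vector"
  assumes "norm a \<le> B" "norm b \<le> B"
  shows "\<bar>(norm a)\<^sup>2 - (norm b)\<^sup>2\<bar> \<le> 2 * B * norm (a - b)"
proof -
  have "(norm a)\<^sup>2 - (norm b)\<^sup>2 = (norm a - norm b) * (norm a + norm b)"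
    by (simp add: power2_eq_square algebra_simps)
  then have "\<bar>(norm a)\<^sup>2 - (norm b)\<^sup>2\<bar> = \<bar>norm a - norm b\<bar> * (norm a + norm b)"
    by (simp add: abs_mult)
  also have "\<dots> \<le> norm (a - b) * (2 * B)"
    using assms by (intro mult_mono norm_triangle_ineq3) auto
  finally show ?thesis by (simp add: algebra_simps)
qed

lemma cs_norm:
  assumes tt: "t0 < tE" and u: "L2_on t0 tE u"
  shows "(\<integral>t. norm (u t) \<partial>lebesgue_on (Omega t0 tE))
     \<le> sqrt (tE - t0) * sqrt (\<integral>t. (norm (u t))\<^sup>2 \<partial>lebesgue_on (Omega t0 tE))"
proof -
  have "\<bar>\<integral>t. norm (u t) \<partial>lebesgue_on (Omega t0 tE)\<bar>
     \<le> sqrt (tE - t0) * sqrt (\<integral>t. (norm (u t))\<^sup>2 \<partial>lebesgue_on (Omega t0 tE))"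
    using cs_ineq[OF fmM, of "\<lambda>t. norm (u t)" t0 tE] u tt muM[OF tt]
    by (auto simp: L2_on_def)
  then show ?thesis by linarith
qed

lemma sq_int_nonneg: "0 \<le> (\<integral>t. (norm (u t))\<^sup>2 \<partial>M)"
  by (intro integral_nonneg_AE AE_I2) simp

lemma normX_parts:
  shows "sqrt (\<integral>t. (norm (a t))\<^sup>2 \<partial>lebesgue_on (Omega t0 tE)) \<le> normX t0 tE a b c"
    and "sqrt (\<integral>t. (norm (b t))\<^sup>2 \<partial>lebesgue_on (Omega t0 tE)) \<le> normX t0 tE a b c"
    and "sqrt (\<integral>t. (norm (c t))\<^sup>2 \<partial>lebesgue_on (Omega t0 tE)) \<le> normX t0 tE a b c"
  unfolding normX_def
  using sq_int_nonneg[where u=a and M="lebesgue_on (Omega t0 tE)"] sq_int_nonneg[where u=b and M="lebesgue_on (Omega t0 tE)"]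
    sq_int_nonneg[where u=c and M="lebesgue_on (Omega t0 tE)"]
  by (auto intro!: real_sqrt_le_mono)

lemma int_D_bound:
  assumes tt: "t0 < tE" and a: "L2_on t0 tE a" and b: "L2_on t0 tE b" and c: "L2_on t0 tE c"
  shows "integrable (lebesgue_on (Omega t0 tE)) (\<lambda>t. norm (b t) + norm (a t) + norm (c t))"
    and "(\<integral>t. norm (b t) + norm (a t) + norm (c t) \<partial>lebesgue_on (Omega t0 tE))
          \<le> 3 * sqrt (tE - t0) * normX t0 tE a b c"
proof -
  note I = L2_norm_int[OF a] L2_norm_int[OF b] L2_norm_int[OF c]
  show "integrable (lebesgue_on (Omega t0 tE)) (\<lambda>t. norm (b t) + norm (a t) + norm (c t))"
    using I by (intro Bochner_Integration.integrable_add)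
  have s0: "0 \<le> sqrt (tE - t0)" using tt by simp
  have "(\<integral>t. norm (b t) + norm (a t) + norm (c t) \<partial>lebesgue_on (Omega t0 tE))
     = (\<integral>t. norm (b t) \<partial>lebesgue_on (Omega t0 tE)) + (\<integral>t. norm (a t) \<partial>lebesgue_on (Omega t0 tE))
       + (\<integral>t. norm (c t) \<partial>lebesgue_on (Omega t0 tE))"
    using I by (simp add: Bochner_Integration.integral_add)
  also have "\<dots> \<le> sqrt (tE - t0) * normX t0 tE a b c + sqrt (tE - t0) * normX t0 tE a b c
       + sqrt (tE - t0) * normX t0 tE a b c"
    using order_trans[OF cs_norm[OF tt a] mult_left_mono[OF normX_parts(1)[where b=b and c=c] s0]]
      order_trans[OF cs_norm[OF tt b] mult_left_mono[OF normX_parts(2)[where a=a and c=c] s0]]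
      order_trans[OF cs_norm[OF tt c] mult_left_mono[OF normX_parts(3)[where a=a and b=b] s0]]
    by linarith
  finally show "(\<integral>t. norm (b t) + norm (a t) + norm (c t) \<partial>lebesgue_on (Omega t0 tE))
          \<le> 3 * sqrt (tE - t0) * normX t0 tE a b c" by simp
qed

lemma lip3:
  fixes g :: "'a::real_normed_vector \<Rightarrow> 'b::real_normed_vector \<Rightarrow> 'c::real_normed_vector \<Rightarrow> 'r::real_normed_vector"
  assumes l: "L-lipschitz_on UNIV (\<lambda>(u, v, w). g u v w)"
  shows "norm (g u1 v1 w1 - g u2 v2 w2) \<le> L * (norm (u1 - u2) + norm (v1 - v2) + norm (w1 - w2))"
proof -
  have "dist (g u1 v1 w1) (g u2 v2 w2) \<le> L * dist (u1, v1, w1) (u2, v2, w2)"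
    using lipschitz_onD[OF l, of "(u1, v1, w1)" "(u2, v2, w2)"] by simp
  also have "\<dots> \<le> L * (norm (u1 - u2) + norm (v1 - v2) + norm (w1 - w2))"
    using dist_triple lipschitz_on_nonneg[OF l] by (intro mult_left_mono)
  finally show ?thesis by (simp add: dist_norm)
qed

lemma l1_int:
  assumes "L2_on t0 tE (z :: real \<Rightarrow> real^'n)"
  shows "integrable (lebesgue_on (Omega t0 tE)) (\<lambda>t. l1norm (z t))"
proof -
  have zi: "integrable (lebesgue_on (Omega t0 tE)) z" by (rule L2_int[OF assms])
  have "\<forall>j. integrable (lebesgue_on (Omega t0 tE)) (\<lambda>t. z t $ j)"
    using zi integrable_iff_component[of "Omega t0 tE" z] by (simp add: Omega_def)
  then show ?thesis unfolding l1norm_def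
    by (intro Bochner_Integration.integrable_sum Bochner_Integration.integrable_abs) auto
qed
theorem mainTheorem20:
  fixes t0 tE :: real
    and tp :: "'m::finite \<Rightarrow> real"
    and f :: "real^'ny \<Rightarrow> real^'ny \<Rightarrow> real^'nz \<Rightarrow> real \<Rightarrow> real"
    and c :: "real^'ny \<Rightarrow> real^'ny \<Rightarrow> real^'nz \<Rightarrow> real \<Rightarrow> real^'nc"
    and b :: "(real^'ny)^'m \<Rightarrow> real^'nb"
  assumes interval: "t0 < tE"
    and points: "\<And>i. tp i \<in> {t0..tE}"
    \<comment> \<open>implicit standing assumption: f and c are measurable in t (Caratheodory)\<close>
    and f_meas: "\<And>u v w. (\<lambda>t. f u v w t) \<in> borel_measurable (lebesgue_on (Omega t0 tE))"
    and c_meas: "\<And>u v w. (\<lambda>t. c u v w t) \<in> borel_measurable (lebesgue_on (Omega t0 tE))"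
    \<comment> \<open>(A.2)\<close>
    and A2_c: "\<exists>B. \<forall>y dy z. (y, dy, z) \<in> Xspace t0 tE \<and> z_nonneg t0 tE z \<longrightarrow>
                 (\<forall>t\<in>Omega t0 tE. l1norm (c (dy t) (y t) (z t) t) \<le> B)"
    and A2_b: "\<exists>B. \<forall>y dy (z :: real \<Rightarrow> real^'nz). (y, dy, z) \<in> Xspace t0 tE \<and> z_nonneg t0 tE z \<longrightarrow>
                 l1norm (b (\<chi> i. y (tp i))) \<le> B"
    and A2_F: "\<exists>m. \<forall>y dy z. (y, dy, z) \<in> Xspace t0 tE \<and> z_nonneg t0 tE z \<longrightarrow>
                 m \<le> Ffun t0 tE f y dy z"
    \<comment> \<open>(A.3)\<close>
    and A3_f: "\<exists>L. \<forall>t\<in>Omega t0 tE. L-lipschitz_on UNIV (\<lambda>(u, v, w). f u v w t)"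
    and A3_c: "\<exists>L. \<forall>t\<in>Omega t0 tE. L-lipschitz_on UNIV (\<lambda>(u, v, w). c u v w t)"
    and A3_b: "\<exists>L. L-lipschitz_on UNIV b"
  shows
    \<comment> \<open>F bounded below on {x : z >= 0}\<close>
    "(\<exists>m. \<forall>y dy z. (y, dy, z) \<in> Xspace t0 tE \<and> z_nonneg t0 tE z \<longrightarrow>
         m \<le> Ffun t0 tE f y dy z)
    \<comment> \<open>r bounded on {x : z >= 0}\<close>
   \<and> (\<exists>B. \<forall>y dy z. (y, dy, z) \<in> Xspace t0 tE \<and> z_nonneg t0 tE z \<longrightarrow>
         \<bar>rfun t0 tE tp c b y dy z\<bar> \<le> B)
    \<comment> \<open>F Lipschitz in x w.r.t. the X-norm\<close>
   \<and> (\<exists>L. \<forall>y1 dy1 z1 y2 dy2 z2.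
         (y1, dy1, z1) \<in> Xspace t0 tE \<and> (y2, dy2, z2) \<in> Xspace t0 tE \<longrightarrow>
         \<bar>Ffun t0 tE f y1 dy1 z1 - Ffun t0 tE f y2 dy2 z2\<bar>
           \<le> L * normX t0 tE (\<lambda>t. y1 t - y2 t) (\<lambda>t. dy1 t - dy2 t) (\<lambda>t. z1 t - z2 t))
    \<comment> \<open>r Lipschitz in x w.r.t. the X-norm (on {x : z >= 0})\<close>
   \<and> (\<exists>L. \<forall>y1 dy1 z1 y2 dy2 z2.
         (y1, dy1, z1) \<in> Xspace t0 tE \<and> z_nonneg t0 tE z1 \<and>
         (y2, dy2, z2) \<in> Xspace t0 tE \<and> z_nonneg t0 tE z2 \<longrightarrow>
         \<bar>rfun t0 tE tp c b y1 dy1 z1 - rfun t0 tE tp c b y2 dy2 z2\<bar>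
           \<le> L * normX t0 tE (\<lambda>t. y1 t - y2 t) (\<lambda>t. dy1 t - dy2 t) (\<lambda>t. z1 t - z2 t))
    \<comment> \<open>F Lipschitz in z w.r.t. the L1 norm\<close>
   \<and> (\<exists>L. \<forall>y dy z1 z2.
         (y, dy, z1) \<in> Xspace t0 tE \<and> (y, dy, z2) \<in> Xspace t0 tE \<longrightarrow>
         \<bar>Ffun t0 tE f y dy z1 - Ffun t0 tE f y dy z2\<bar>
           \<le> L * L1norm t0 tE (\<lambda>t. z1 t - z2 t))
    \<comment> \<open>r Lipschitz in z w.r.t. the L1 norm (on {x : z >= 0})\<close>
   \<and> (\<exists>L. \<forall>y dy z1 z2.
         (y, dy, z1) \<in> Xspace t0 tE \<and> z_nonneg t0 tE z1 \<and>
         (y, dy, z2) \<in> Xspace t0 tE \<and> z_nonneg t0 tE z2 \<longrightarrow>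
         \<bar>rfun t0 tE tp c b y dy z1 - rfun t0 tE tp c b y dy z2\<bar>
           \<le> L * L1norm t0 tE (\<lambda>t. z1 t - z2 t))"
proof -
  define M where "M = lebesgue_on (Omega t0 tE)"
  define \<mu> where "\<mu> = tE - t0"
  have mu0: "\<mu> > 0" using interval by (simp add: \<mu>_def)
  have fm: "finite_measure M" unfolding M_def by (rule fmM)
  have spM: "space M = Omega t0 tE" by (simp add: M_def)
  have Oms: "(t0 + tE) / 2 \<in> Omega t0 tE" using interval by (simp add: Omega_def)
  have ci: "integrable M (\<lambda>t. k)" for k :: real using finite_measure.integrable_const[OF fm] .
  have mM: "measure M (space M) = \<mu>" using muM[OF interval] by (simp add: M_def \<mu>_def)
  have intc: "(\<integral>t. k \<partial>M) = \<mu> * k" for k :: real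
    using mM by simp
  obtain Lf where Lf: "\<forall>t\<in>Omega t0 tE. Lf-lipschitz_on UNIV (\<lambda>(u, v, w). f u v w t)"
    using A3_f by blast
  have Lf0: "Lf \<ge> 0" using Lf Oms lipschitz_on_nonneg by blast
  obtain Lc where Lc: "\<forall>t\<in>Omega t0 tE. Lc-lipschitz_on UNIV (\<lambda>(u, v, w). c u v w t)"
    using A3_c by blast
  have Lc0: "Lc \<ge> 0" using Lc Oms lipschitz_on_nonneg by blast
  obtain Lb where Lb: "Lb-lipschitz_on UNIV b" using A3_b by blast
  have Lb0: "Lb \<ge> 0" using Lb lipschitz_on_nonneg by blast
  obtain Bc0 where Bc0: "\<forall>y dy z. (y, dy, z) \<in> Xspace t0 tE \<and> z_nonneg t0 tE z \<longrightarrow>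
                 (\<forall>t\<in>Omega t0 tE. l1norm (c (dy t) (y t) (z t) t) \<le> Bc0)" using A2_c by blast
  define Bc where "Bc = max Bc0 0"
  have Bc: "norm (c (dy t) (y t) (z t) t) \<le> Bc"
    if "(y, dy, z) \<in> Xspace t0 tE" "z_nonneg t0 tE z" "t \<in> Omega t0 tE" for y dy z t
    using Bc0 that norm_le_l1_cart[of "c (dy t) (y t) (z t) t"] unfolding l1norm_def Bc_def by force
  have Bc00: "Bc \<ge> 0" by (simp add: Bc_def)
  obtain Bb0 where Bb0: "\<forall>y dy (z :: real \<Rightarrow> real^'nz). (y, dy, z) \<in> Xspace t0 tE \<and> z_nonneg t0 tE z \<longrightarrow>
                 l1norm (b (\<chi> i. y (tp i))) \<le> Bb0" using A2_b by blast
  define Bb where "Bb = max Bb0 0"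
  have Bb: "norm (b (\<chi> i. y (tp i))) \<le> Bb"
    if "(y, dy, z) \<in> Xspace t0 tE" "z_nonneg t0 tE z" for y dy and z :: "real \<Rightarrow> real^'nz"
    using Bb0 that norm_le_l1_cart[of "b (\<chi> i. y (tp i))"] unfolding l1norm_def Bb_def by force
  have Bb00: "Bb \<ge> 0" by (simp add: Bb_def)
  have XL: "L2_on t0 tE y \<and> L2_on t0 tE dy \<and> L2_on t0 tE z" if "(y, dy, z) \<in> Xspace t0 tE" for y dy z
    using that by (simp add: Xspace_def H1_pair_def)
  have fmeas: "(\<lambda>t. f (dy t) (y t) (z t) t) \<in> borel_measurable M"
    if "(y, dy, z) \<in> Xspace t0 tE" for y dy z
  proof -
    have "(\<lambda>t. (\<lambda>p t. case p of (u, v, w) \<Rightarrow> f u v w t) ((\<lambda>t. (dy t, y t, z t)) t) t) \<in> borel_measurable M"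
    proof (rule cara_meas[where L=Lf and g="\<lambda>p t. case p of (u, v, w) \<Rightarrow> f u v w t" and X="\<lambda>t. (dy t, y t, z t)"])
      show "(\<lambda>t. case p of (u, v, w) \<Rightarrow> f u v w t) \<in> borel_measurable M" for p
        by (cases p) (auto simp: M_def f_meas)
      show "Lf-lipschitz_on UNIV (\<lambda>p. case p of (u, v, w) \<Rightarrow> f u v w t)" if "t \<in> space M" for t
        using Lf that by (simp add: spM)
      show "(\<lambda>t. (dy t, y t, z t)) \<in> borel_measurable M"
        using XL[OF that] by (auto simp: M_def L2_on_def intro!: measurable_Pair)
    qed
    then show ?thesis by simp
  qed
  have cmeas: "(\<lambda>t. c (dy t) (y t) (z t) t) \<in> borel_measurable M"
    if "(y, dy, z) \<in> Xspace t0 tE" for y dy z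
  proof -
    have "(\<lambda>t. (\<lambda>p t. case p of (u, v, w) \<Rightarrow> c u v w t) ((\<lambda>t. (dy t, y t, z t)) t) t) \<in> borel_measurable M"
    proof (rule cara_meas[where L=Lc and g="\<lambda>p t. case p of (u, v, w) \<Rightarrow> c u v w t" and X="\<lambda>t. (dy t, y t, z t)"])
      show "(\<lambda>t. case p of (u, v, w) \<Rightarrow> c u v w t) \<in> borel_measurable M" for p
        by (cases p) (auto simp: M_def c_meas)
      show "Lc-lipschitz_on UNIV (\<lambda>p. case p of (u, v, w) \<Rightarrow> c u v w t)" if "t \<in> space M" for t
        using Lc that by (simp add: spM)
      show "(\<lambda>t. (dy t, y t, z t)) \<in> borel_measurable M"
        using XL[OF that] by (auto simp: M_def L2_on_def intro!: measurable_Pair)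
    qed
    then show ?thesis by simp
  qed
  have c2meas: "(\<lambda>t. (norm (c (dy t) (y t) (z t) t))\<^sup>2) \<in> borel_measurable M"
    if "(y, dy, z) \<in> Xspace t0 tE" for y dy z
    using cmeas[OF that] by measurable
  have P1: "\<exists>m. \<forall>y dy z. (y, dy, z) \<in> Xspace t0 tE \<and> z_nonneg t0 tE z \<longrightarrow>
         m \<le> Ffun t0 tE f y dy z" by (rule A2_F)
  have cint: "\<bar>\<integral>t. (norm (c (dy t) (y t) (z t) t))\<^sup>2 \<partial>M\<bar> \<le> \<mu> * Bc\<^sup>2"
    if "(y, dy, z) \<in> Xspace t0 tE" "z_nonneg t0 tE z" for y dy z
  proof -
    have "\<bar>(\<integral>t. (norm (c (dy t) (y t) (z t) t))\<^sup>2 \<partial>M) - (\<integral>t. 0 \<partial>M)\<bar> \<le> (\<integral>t. Bc\<^sup>2 \<partial>M)"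
    proof (rule lip_integral[OF c2meas[OF that(1)] _ ci])
      show "(\<lambda>t. 0::real) \<in> borel_measurable M" by simp
      fix t assume "t \<in> space M"
      then have "norm (c (dy t) (y t) (z t) t) \<le> Bc" using Bc that spM by blast
      then show "\<bar>(norm (c (dy t) (y t) (z t) t))\<^sup>2 - 0\<bar> \<le> Bc\<^sup>2"
        by (simp add: power_mono)
    qed
    then show ?thesis by (simp add: mM)
  qed
  have P2: "\<exists>B. \<forall>y dy z. (y, dy, z) \<in> Xspace t0 tE \<and> z_nonneg t0 tE z \<longrightarrow>
         \<bar>rfun t0 tE tp c b y dy z\<bar> \<le> B"
  proof (intro exI[of _ "\<mu> * Bc\<^sup>2 + Bb\<^sup>2"] allI impI, elim conjE)
    fix y dy :: "real \<Rightarrow> real^'ny" and z :: "real \<Rightarrow> real^'nz"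
    assume x: "(y, dy, z) \<in> Xspace t0 tE" and zn: "z_nonneg t0 tE z"
    have "(norm (b (\<chi> i. y (tp i))))\<^sup>2 \<le> Bb\<^sup>2" using Bb[OF x zn] by (simp add: power_mono)
    then show "\<bar>rfun t0 tE tp c b y dy z\<bar> \<le> \<mu> * Bc\<^sup>2 + Bb\<^sup>2"
      using cint[OF x zn] abs_triangle_ineq[of "\<integral>t. (norm (c (dy t) (y t) (z t) t))\<^sup>2 \<partial>M" "(norm (b (\<chi> i. y (tp i))))\<^sup>2"]
      unfolding rfun_def M_def[symmetric] by simp
  qed
  have lipf: "\<bar>f u1 v1 w1 t - f u2 v2 w2 t\<bar> \<le> Lf * (norm (u1 - u2) + norm (v1 - v2) + norm (w1 - w2))"
    if "t \<in> Omega t0 tE" for u1 v1 w1 u2 v2 w2 t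
    using lip3[OF Lf[rule_format, OF that]] by simp
  have lipc: "norm (c u1 v1 w1 t - c u2 v2 w2 t) \<le> Lc * (norm (u1 - u2) + norm (v1 - v2) + norm (w1 - w2))"
    if "t \<in> Omega t0 tE" for u1 v1 w1 u2 v2 w2 t
    using lip3[OF Lc[rule_format, OF that]] by simp
  have P3: "\<exists>L. \<forall>y1 dy1 z1 y2 dy2 z2.
         (y1, dy1, z1) \<in> Xspace t0 tE \<and> (y2, dy2, z2) \<in> Xspace t0 tE \<longrightarrow>
         \<bar>Ffun t0 tE f y1 dy1 z1 - Ffun t0 tE f y2 dy2 z2\<bar>
           \<le> L * normX t0 tE (\<lambda>t. y1 t - y2 t) (\<lambda>t. dy1 t - dy2 t) (\<lambda>t. z1 t - z2 t)"
  proof (intro exI[of _ "Lf * (3 * sqrt \<mu>)"] allI impI, elim conjE)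
    fix y1 dy1 y2 dy2 :: "real \<Rightarrow> real^'ny" and z1 z2 :: "real \<Rightarrow> real^'nz"
    assume x1: "(y1, dy1, z1) \<in> Xspace t0 tE" and x2: "(y2, dy2, z2) \<in> Xspace t0 tE"
    define a where "a = (\<lambda>t. y1 t - y2 t)"
    define da where "da = (\<lambda>t. dy1 t - dy2 t)"
    define dz where "dz = (\<lambda>t. z1 t - z2 t)"
    have La: "L2_on t0 tE a" "L2_on t0 tE da" "L2_on t0 tE dz"
      using XL[OF x1] XL[OF x2] unfolding a_def da_def dz_def by (auto intro: L2_diff)
    note DB = int_D_bound[OF interval La]
    have "\<bar>Ffun t0 tE f y1 dy1 z1 - Ffun t0 tE f y2 dy2 z2\<bar>
        \<le> (\<integral>t. Lf * (norm (da t) + norm (a t) + norm (dz t)) \<partial>M)"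
      unfolding Ffun_def M_def[symmetric]
    proof (rule lip_integral[OF fmeas[OF x1] fmeas[OF x2]])
      show "integrable M (\<lambda>t. Lf * (norm (da t) + norm (a t) + norm (dz t)))"
        using DB(1) by (simp add: M_def)
      fix t assume "t \<in> space M"
      then show "\<bar>f (dy1 t) (y1 t) (z1 t) t - f (dy2 t) (y2 t) (z2 t) t\<bar>
          \<le> Lf * (norm (da t) + norm (a t) + norm (dz t))"
        using lipf spM by (simp add: a_def da_def dz_def)
    qed
    also have "\<dots> = Lf * (\<integral>t. norm (da t) + norm (a t) + norm (dz t) \<partial>M)" by simp
    also have "\<dots> \<le> Lf * (3 * sqrt (tE - t0) * normX t0 tE a da dz)"
      using DB(2) Lf0 by (intro mult_left_mono) (auto simp: M_def)
    finally show "\<bar>Ffun t0 tE f y1 dy1 z1 - Ffun t0 tE f y2 dy2 z2\<bar>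
           \<le> Lf * (3 * sqrt \<mu>) * normX t0 tE (\<lambda>t. y1 t - y2 t) (\<lambda>t. dy1 t - dy2 t) (\<lambda>t. z1 t - z2 t)"
      by (simp add: a_def da_def dz_def \<mu>_def mult.assoc)
  qed
  have P5: "\<exists>L. \<forall>y dy z1 z2.
         (y, dy, z1) \<in> Xspace t0 tE \<and> (y, dy, z2) \<in> Xspace t0 tE \<longrightarrow>
         \<bar>Ffun t0 tE f y dy z1 - Ffun t0 tE f y dy z2\<bar>
           \<le> L * L1norm t0 tE (\<lambda>t. z1 t - z2 t)"
  proof (intro exI[of _ "Lf"] allI impI, elim conjE)
    fix y dy :: "real \<Rightarrow> real^'ny" and z1 z2 :: "real \<Rightarrow> real^'nz"
    assume x1: "(y, dy, z1) \<in> Xspace t0 tE" and x2: "(y, dy, z2) \<in> Xspace t0 tE"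
    define dz where "dz = (\<lambda>t. z1 t - z2 t)"
    have Lz: "L2_on t0 tE dz" using XL[OF x1] XL[OF x2] unfolding dz_def by (auto intro: L2_diff)
    have "\<bar>Ffun t0 tE f y dy z1 - Ffun t0 tE f y dy z2\<bar> \<le> (\<integral>t. Lf * l1norm (dz t) \<partial>M)"
      unfolding Ffun_def M_def[symmetric]
    proof (rule lip_integral[OF fmeas[OF x1] fmeas[OF x2]])
      show "integrable M (\<lambda>t. Lf * l1norm (dz t))"
        using l1_int[OF Lz] by (simp add: M_def)
      fix t assume "t \<in> space M"
      then have "\<bar>f (dy t) (y t) (z1 t) t - f (dy t) (y t) (z2 t) t\<bar> \<le> Lf * norm (dz t)"
        using lipf[of t "dy t" "y t" "z1 t" "dy t" "y t" "z2 t"] spM by (simp add: dz_def)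
      also have "\<dots> \<le> Lf * l1norm (dz t)"
        using Lf0 norm_le_l1_cart[of "dz t"] by (intro mult_left_mono) (auto simp: l1norm_def)
      finally show "\<bar>f (dy t) (y t) (z1 t) t - f (dy t) (y t) (z2 t) t\<bar> \<le> Lf * l1norm (dz t)" .
    qed
    then show "\<bar>Ffun t0 tE f y dy z1 - Ffun t0 tE f y dy z2\<bar> \<le> Lf * L1norm t0 tE (\<lambda>t. z1 t - z2 t)"
      by (simp add: L1norm_def M_def dz_def)
  qed
  have P6: "\<exists>L. \<forall>y dy z1 z2.
         (y, dy, z1) \<in> Xspace t0 tE \<and> z_nonneg t0 tE z1 \<and>
         (y, dy, z2) \<in> Xspace t0 tE \<and> z_nonneg t0 tE z2 \<longrightarrow>
         \<bar>rfun t0 tE tp c b y dy z1 - rfun t0 tE tp c b y dy z2\<bar>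
           \<le> L * L1norm t0 tE (\<lambda>t. z1 t - z2 t)"
  proof (intro exI[of _ "2 * Bc * Lc"] allI impI, elim conjE)
    fix y dy :: "real \<Rightarrow> real^'ny" and z1 z2 :: "real \<Rightarrow> real^'nz"
    assume x1: "(y, dy, z1) \<in> Xspace t0 tE" and n1: "z_nonneg t0 tE z1"
      and x2: "(y, dy, z2) \<in> Xspace t0 tE" and n2: "z_nonneg t0 tE z2"
    define dz where "dz = (\<lambda>t. z1 t - z2 t)"
    have Lz: "L2_on t0 tE dz" using XL[OF x1] XL[OF x2] unfolding dz_def by (auto intro: L2_diff)
    have "\<bar>(\<integral>t. (norm (c (dy t) (y t) (z1 t) t))\<^sup>2 \<partial>M) - (\<integral>t. (norm (c (dy t) (y t) (z2 t) t))\<^sup>2 \<partial>M)\<bar>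
       \<le> (\<integral>t. 2 * Bc * Lc * l1norm (dz t) \<partial>M)"
    proof (rule lip_integral[OF c2meas[OF x1] c2meas[OF x2]])
      show "integrable M (\<lambda>t. 2 * Bc * Lc * l1norm (dz t))"
        using l1_int[OF Lz] by (simp add: M_def)
      fix t assume "t \<in> space M"
      then have t: "t \<in> Omega t0 tE" using spM by simp
      have "\<bar>(norm (c (dy t) (y t) (z1 t) t))\<^sup>2 - (norm (c (dy t) (y t) (z2 t) t))\<^sup>2\<bar>
          \<le> 2 * Bc * norm (c (dy t) (y t) (z1 t) t - c (dy t) (y t) (z2 t) t)"
        by (rule sqdiff[OF Bc[OF x1 n1 t] Bc[OF x2 n2 t]])
      also have "\<dots> \<le> 2 * Bc * (Lc * norm (dz t))"
        using lipc[OF t, of "dy t" "y t" "z1 t" "dy t" "y t" "z2 t"] Bc00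
        by (intro mult_left_mono) (auto simp: dz_def)
      also have "\<dots> \<le> 2 * Bc * (Lc * l1norm (dz t))"
        using Lc0 Bc00 norm_le_l1_cart[of "dz t"]
        by (intro mult_left_mono) (auto simp: l1norm_def)
      finally show "\<bar>(norm (c (dy t) (y t) (z1 t) t))\<^sup>2 - (norm (c (dy t) (y t) (z2 t) t))\<^sup>2\<bar>
          \<le> 2 * Bc * Lc * l1norm (dz t)" by (simp add: mult.assoc)
    qed
    then show "\<bar>rfun t0 tE tp c b y dy z1 - rfun t0 tE tp c b y dy z2\<bar>
           \<le> 2 * Bc * Lc * L1norm t0 tE (\<lambda>t. z1 t - z2 t)"
      by (simp add: rfun_def L1norm_def M_def dz_def)
  qed
  define Cs where "Cs = sqrt \<mu> / \<mu> + 2 * sqrt \<mu>"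
  define Lr where "Lr = 2 * Bc * Lc * (3 * sqrt \<mu>) + 2 * Bb * Lb * (real CARD('m) * Cs)"
  have P4: "\<exists>L. \<forall>y1 dy1 z1 y2 dy2 z2.
         (y1, dy1, z1) \<in> Xspace t0 tE \<and> z_nonneg t0 tE z1 \<and>
         (y2, dy2, z2) \<in> Xspace t0 tE \<and> z_nonneg t0 tE z2 \<longrightarrow>
         \<bar>rfun t0 tE tp c b y1 dy1 z1 - rfun t0 tE tp c b y2 dy2 z2\<bar>
           \<le> L * normX t0 tE (\<lambda>t. y1 t - y2 t) (\<lambda>t. dy1 t - dy2 t) (\<lambda>t. z1 t - z2 t)"
  proof (intro exI[of _ Lr] allI impI, elim conjE)
    fix y1 dy1 y2 dy2 :: "real \<Rightarrow> real^'ny" and z1 z2 :: "real \<Rightarrow> real^'nz"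
    assume x1: "(y1, dy1, z1) \<in> Xspace t0 tE" and n1: "z_nonneg t0 tE z1"
      and x2: "(y2, dy2, z2) \<in> Xspace t0 tE" and n2: "z_nonneg t0 tE z2"
    define a where "a = (\<lambda>t. y1 t - y2 t)"
    define da where "da = (\<lambda>t. dy1 t - dy2 t)"
    define dz where "dz = (\<lambda>t. z1 t - z2 t)"
    define N where "N = normX t0 tE a da dz"
    have La: "L2_on t0 tE a" "L2_on t0 tE da" "L2_on t0 tE dz"
      using XL[OF x1] XL[OF x2] unfolding a_def da_def dz_def by (auto intro: L2_diff)
    note DB = int_D_bound[OF interval La]
    have N0: "N \<ge> 0" by (simp add: N_def normX_def)
    have sm0: "sqrt \<mu> \<ge> 0" using mu0 by simp
    define I1 where "I1 = (\<integral>t. (norm (c (dy1 t) (y1 t) (z1 t) t))\<^sup>2 \<partial>M)"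
    define I2 where "I2 = (\<integral>t. (norm (c (dy2 t) (y2 t) (z2 t) t))\<^sup>2 \<partial>M)"
    define Y1 where "Y1 = (\<chi> i. y1 (tp i))"
    define Y2 where "Y2 = (\<chi> i. y2 (tp i))"
    have "\<bar>I1 - I2\<bar> \<le> (\<integral>t. 2 * Bc * Lc * (norm (da t) + norm (a t) + norm (dz t)) \<partial>M)"
      unfolding I1_def I2_def
    proof (rule lip_integral[OF c2meas[OF x1] c2meas[OF x2]])
      show "integrable M (\<lambda>t. 2 * Bc * Lc * (norm (da t) + norm (a t) + norm (dz t)))"
        using DB(1) by (simp add: M_def)
      fix t assume "t \<in> space M"
      then have t: "t \<in> Omega t0 tE" using spM by simp
      have "\<bar>(norm (c (dy1 t) (y1 t) (z1 t) t))\<^sup>2 - (norm (c (dy2 t) (y2 t) (z2 t) t))\<^sup>2\<bar>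
          \<le> 2 * Bc * norm (c (dy1 t) (y1 t) (z1 t) t - c (dy2 t) (y2 t) (z2 t) t)"
        by (rule sqdiff[OF Bc[OF x1 n1 t] Bc[OF x2 n2 t]])
      also have "\<dots> \<le> 2 * Bc * (Lc * (norm (da t) + norm (a t) + norm (dz t)))"
        using lipc[OF t, of "dy1 t" "y1 t" "z1 t" "dy2 t" "y2 t" "z2 t"] Bc00
        by (intro mult_left_mono) (auto simp: a_def da_def dz_def)
      finally show "\<bar>(norm (c (dy1 t) (y1 t) (z1 t) t))\<^sup>2 - (norm (c (dy2 t) (y2 t) (z2 t) t))\<^sup>2\<bar>
          \<le> 2 * Bc * Lc * (norm (da t) + norm (a t) + norm (dz t))" by (simp add: mult.assoc)
    qed
    also have "\<dots> = 2 * Bc * Lc * (\<integral>t. norm (da t) + norm (a t) + norm (dz t) \<partial>M)" by simp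
    also have "\<dots> \<le> 2 * Bc * Lc * (3 * sqrt \<mu> * N)"
      using DB(2) Lc0 Bc00 by (intro mult_left_mono) (auto simp: M_def N_def \<mu>_def)
    finally have I: "\<bar>I1 - I2\<bar> \<le> 2 * Bc * Lc * (3 * sqrt \<mu>) * N" by (simp add: mult.assoc)
    have pt: "norm (y1 s - y2 s) \<le> Cs * N" if s: "s \<in> {t0..tE}" for s
    proof -
      have H: "H1_pair t0 tE y1 dy1" "H1_pair t0 tE y2 dy2" using x1 x2 by (auto simp: Xspace_def)
      have "norm (y1 s - y2 s) \<le> (\<integral>t. norm (a t) \<partial>M) / \<mu> + 2 * (\<integral>t. norm (da t) \<partial>M)"
        using sobolev[OF interval H s] by (simp add: a_def da_def M_def \<mu>_def)
      also have "\<dots> \<le> (sqrt \<mu> * N) / \<mu> + 2 * (sqrt \<mu> * N)"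
      proof -
        have "(\<integral>t. norm (a t) \<partial>M) \<le> sqrt \<mu> * N"
          using order_trans[OF cs_norm[OF interval La(1)] mult_left_mono[OF normX_parts(1)[where b=da and c=dz] sm0[unfolded \<mu>_def]]]
          by (simp add: M_def N_def \<mu>_def)
        moreover have "(\<integral>t. norm (da t) \<partial>M) \<le> sqrt \<mu> * N"
          using order_trans[OF cs_norm[OF interval La(2)] mult_left_mono[OF normX_parts(2)[where a=a and c=dz] sm0[unfolded \<mu>_def]]]
          by (simp add: M_def N_def \<mu>_def)
        ultimately show ?thesis using mu0 divide_right_mono[of "\<integral>t. norm (a t) \<partial>M" "sqrt \<mu> * N" \<mu>]
          by linarith
      qed
      also have "\<dots> = Cs * N" by (simp add: Cs_def algebra_simps)
      finally show ?thesis .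
    qed
    have "norm (Y1 - Y2) \<le> (\<Sum>i\<in>UNIV. norm ((Y1 - Y2) $ i))"
      unfolding norm_vec_def by (rule L2_set_le_sum) simp
    also have "\<dots> \<le> real CARD('m) * (Cs * N)"
      using pt points by (intro sum_bounded_above) (simp add: Y1_def Y2_def)
    finally have Yb: "norm (Y1 - Y2) \<le> real CARD('m) * (Cs * N)" .
    have "\<bar>(norm (b Y1))\<^sup>2 - (norm (b Y2))\<^sup>2\<bar> \<le> 2 * Bb * norm (b Y1 - b Y2)"
      by (rule sqdiff) (use Bb[OF x1 n1] Bb[OF x2 n2] in \<open>simp_all add: Y1_def Y2_def\<close>)
    also have "\<dots> \<le> 2 * Bb * (Lb * norm (Y1 - Y2))"
      using lipschitz_onD[OF Lb, of Y1 Y2] Bb00 by (intro mult_left_mono) (auto simp: dist_norm)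
    also have "\<dots> \<le> 2 * Bb * (Lb * (real CARD('m) * (Cs * N)))"
      using Yb Bb00 Lb0 by (intro mult_left_mono) auto
    finally have B: "\<bar>(norm (b Y1))\<^sup>2 - (norm (b Y2))\<^sup>2\<bar> \<le> 2 * Bb * Lb * (real CARD('m) * Cs) * N"
      by (simp add: mult.assoc)
    have "\<bar>rfun t0 tE tp c b y1 dy1 z1 - rfun t0 tE tp c b y2 dy2 z2\<bar>
        = \<bar>(I1 - I2) + ((norm (b Y1))\<^sup>2 - (norm (b Y2))\<^sup>2)\<bar>"
      by (simp add: rfun_def I1_def I2_def Y1_def Y2_def M_def algebra_simps)
    also have "\<dots> \<le> \<bar>I1 - I2\<bar> + \<bar>(norm (b Y1))\<^sup>2 - (norm (b Y2))\<^sup>2\<bar>" by (rule abs_triangle_ineq)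
    also have "\<dots> \<le> Lr * N" using I B by (simp add: Lr_def algebra_simps)
    finally show "\<bar>rfun t0 tE tp c b y1 dy1 z1 - rfun t0 tE tp c b y2 dy2 z2\<bar>
           \<le> Lr * normX t0 tE (\<lambda>t. y1 t - y2 t) (\<lambda>t. dy1 t - dy2 t) (\<lambda>t. z1 t - z2 t)"
      by (simp add: N_def a_def da_def dz_def)
  qed
  show ?thesis using P1 P2 P3 P4 P5 P6 by blast
qed
end
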